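(* Let $(x(n))_{n\geq0}$ and $(y(n))_{n\geq0}$ be sequences of nonnegative integers with $x(0)=1$, $y(0)=0$, such that for every $n \geq 1$ the set $\{x(n), y(n)\}$ consists of the two smallest nonnegative integers not belonging to $\{x(k) : k \leq n-1\} \cup \{y(k) : k \leq n-1\}$, and such that for all $n \geq 0$, $x(x(n))$ and $y(y(n))$ are even while $x(y(n))$ and $y(x(n))$ are odd. Then $x(n) = a(n)$ and $y(n) = b(n)$ for all $n \geq 0$.
   Context: A nonnegative integer is odious if the sum of its binary digits is odd and evil if it is even. $(a(n))_{n\geq0}$ is the increasing sequence of odious numbers and $(b(n))_{n\geq 0}$ the increasing sequence of evil numbers, both indexed from $0$. *)

theory Defs
  imports Main "HOL-Library.Infinite_Set"
begin

fun bitsum :: "nat \<Rightarrow> nat" where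
  "bitsum n = (if n = 0 then 0 else n mod 2 + bitsum (n div 2))"

declare bitsum.simps [simp del]

definition odious :: "nat \<Rightarrow> bool" where
  "odious n \<longleftrightarrow> odd (bitsum n)"

definition evil :: "nat \<Rightarrow> bool" where
  "evil n \<longleftrightarrow> even (bitsum n)"

text \<open>a = increasing enumeration of odious numbers, b = of evil numbers, indexed from 0.\<close>
definition odious_seq :: "nat \<Rightarrow> nat" where
  "odious_seq = enumerate {n. odious n}"

definition evil_seq :: "nat \<Rightarrow> nat" where
  "evil_seq = enumerate {n. evil n}"

definition first_missing :: "nat set \<Rightarrow> nat" where
  "first_missing S = (LEAST m. m \<notin> S)"

definition second_missing :: "nat set \<Rightarrow> nat" where
  "second_missing S = (LEAST m. m \<notin> S \<and> m \<noteq> first_missing S)"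

end

theory Submission
  imports Defs
begin

lemma enum_eq:
  fixes f :: "nat \<Rightarrow> nat"
  assumes sm: "strict_mono f" and r: "range f = S"
  shows "enumerate S n = f n"
proof -
  have inf: "infinite S" using r sm strict_mono_imp_inj_on
    by (metis finite_imageD infinite_UNIV_nat)
  show ?thesis
  proof (induction n)
    case 0
    show ?case unfolding enumerate_0
    proof (rule Least_equality)
      show "f 0 \<in> S" using r by auto
      fix s assume "s \<in> S" then obtain k where "s = f k" using r by auto
      then show "f 0 \<le> s" using sm by (simp add: strict_mono_less_eq)
    qed
  next
    case (Suc n)
    show ?case unfolding enumerate_Suc''[OF inf] Suc
    proof (rule Least_equality)
      show "f (Suc n) \<in> S \<and> f n < f (Suc n)" using r sm by (auto simp: strict_mono_less)
      fix s assume "s \<in> S \<and> f n < s" then obtain k where "s = f k" "f n < f k" using r by auto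
      then show "f (Suc n) \<le> s" using sm by (simp add: strict_mono_less strict_mono_less_eq)
    qed
  qed
qed

lemma bitsum_rec: "bitsum m = m mod 2 + bitsum (m div 2)"
  by (cases "m = 0") (simp_all add: bitsum.simps[of m] bitsum.simps[of 0])

lemma fm: "first_missing {0..<2*n} = 2*n"
  unfolding first_missing_def by (rule Least_equality) auto

lemma sm2: "second_missing {0..<2*n} = Suc (2*n)"
  unfolding second_missing_def fm by (rule Least_equality) auto

theorem theorem6:
  fixes x y :: "nat \<Rightarrow> nat"
  assumes "x 0 = 1" and "y 0 = 0"
    and "\<And>n. n \<ge> 1 \<Longrightarrow>
           {x n, y n} = {first_missing ({x k | k. k \<le> n - 1} \<union> {y k | k. k \<le> n - 1}),
                         second_missing ({x k | k. k \<le> n - 1} \<union> {y k | k. k \<le> n - 1})}"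
    and "\<And>n. even (x (x n))" and "\<And>n. even (y (y n))"
    and "\<And>n. odd (x (y n))" and "\<And>n. odd (y (x n))"
  shows "\<forall>n. x n = odious_seq n \<and> y n = evil_seq n"
proof -
  have L1: "{x n, y n} = {2*n, Suc (2*n)}" for n
  proof (induction n rule: less_induct)
    case (less n)
    show ?case
    proof (cases "n = 0")
      case True then show ?thesis using assms(1,2) by auto
    next
      case False
      have "{x k | k. k \<le> n - 1} \<union> {y k | k. k \<le> n - 1} = (\<Union>k<n. {x k, y k})"
        using False by (force intro: le_less_trans[of _ "n - 1"])
      also have "\<dots> = (\<Union>k<n. {2*k, Suc (2*k)})" using less by auto
      also have "\<dots> = {0..<2*n}"
      proof (rule set_eqI)
        fix m show "m \<in> (\<Union>k<n. {2*k, Suc (2*k)}) \<longleftrightarrow> m \<in> {0..<2*n}"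
          by (auto intro!: bexI[of _ "m div 2"])
      qed
      finally show ?thesis using assms(3)[of n] False fm sm2 by auto
    qed
  qed
  have xd: "x n div 2 = n" "y n div 2 = n" "x n \<noteq> y n" for n
    using L1[of n] by (auto simp: doubleton_eq_iff)
  have cover: "m \<in> range x \<or> m \<in> range y" for m
  proof -
    have "m \<in> {2*(m div 2), Suc (2*(m div 2))}" by auto
    then show ?thesis using L1[of "m div 2"] by auto
  qed
  have disj: "m \<in> range x \<Longrightarrow> m \<notin> range y" for m
    using xd by (metis imageE)
  have xv: "x m = 2*m \<or> x m = Suc (2*m)" "y m = 2*m \<or> y m = Suc (2*m)" for m
    using L1[of m] by (auto simp: doubleton_eq_iff)
  have Xx: "x m = (if m \<in> range x then 2*m else Suc (2*m))" for m
  proof (cases "m \<in> range x")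
    case True then obtain n where "m = x n" by auto
    then show ?thesis using assms(4)[of n] xv[of m] True by auto
  next
    case False then obtain n where "m = y n" using cover by auto
    then show ?thesis using assms(6)[of n] xv[of m] False by auto
  qed
  have Yy: "y m = (if m \<in> range x then Suc (2*m) else 2*m)" for m
  proof (cases "m \<in> range x")
    case True then obtain n where "m = x n" by auto
    then show ?thesis using assms(7)[of n] xv[of m] True by auto
  next
    case False then obtain n where "m = y n" using cover by auto
    then show ?thesis using assms(5)[of n] xv[of m] False by auto
  qed
  have L3: "m \<in> range x \<longleftrightarrow> odious m" for m
  proof (induction m rule: less_induct)
    case (less m)
    show ?case
    proof (cases "m = 0")
      case True
      have "0 \<notin> range x" using xd(1) assms(1) by (metis div_0 imageE zero_neq_one)
      then show ?thesis using True by (simp add: odious_def bitsum.simps)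
    next
      case False
      define q where "q = m div 2"
      have q: "q < m" using False q_def by simp
      have "m \<in> range x \<longleftrightarrow> m = x q"
        using xd(1) q_def by (metis imageE rangeI)
      also have "\<dots> \<longleftrightarrow> (if odious q then m = 2*q else m = Suc (2*q))"
        using Xx[of q] less[OF q] by simp
      also have "\<dots> \<longleftrightarrow> odious m"
      proof -
        have m: "m = 2*q + m mod 2" using q_def by simp
        have b: "bitsum m = m mod 2 + bitsum q" using bitsum_rec[of m] q_def by simp
        show ?thesis
        proof (cases "m mod 2 = 0")
          case True then show ?thesis unfolding odious_def using m b by auto
        next
          case False then have "m mod 2 = 1" by simp
          then show ?thesis unfolding odious_def using m b by auto
        qed
      qed
      finally show ?thesis .
    qed
  qed
  have rx: "range x = {n. odious n}" using L3 by auto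
  have ry: "range y = {n. evil n}"
  proof -
    have "m \<in> range y \<longleftrightarrow> \<not> odious m" for m using L3[of m] cover[of m] disj[of m] by blast
    moreover have "evil m \<longleftrightarrow> \<not> odious m" for m unfolding evil_def odious_def by simp
    ultimately show ?thesis by auto
  qed
  have smx: "strict_mono x" unfolding strict_mono_Suc_iff
  proof
    fix n show "x n < x (Suc n)" using xv(1)[of n] xv(1)[of "Suc n"] by auto
  qed
  have smy: "strict_mono y" unfolding strict_mono_Suc_iff
  proof
    fix n show "y n < y (Suc n)" using xv(2)[of n] xv(2)[of "Suc n"] by auto
  qed
  show ?thesis unfolding odious_seq_def evil_seq_def
    using enum_eq[OF smx rx] enum_eq[OF smy ry] by simp
qed

end
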